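(* Let $A(x)=\sin^2(2\pi x)$, $\hat m(A)=\frac{A(1/3)+A(2/3)}{2}$, $\eta(x)=\frac{x}{4}+\frac12$, $F(x)=A(\frac{x}{2})+A(\frac{x}{4}+\frac12)$, and $V_2(x)=\lim_{n\to\infty}\sum_{i=0}^{n-1}[F(\eta^i(x))-2\hat m(A)]$ for $x\in[0,1]$. For each $N$ let $$\varphi_N(x)=\sum_{i=0}^{N}\frac{2\pi}{4^i}\left(\sin(\pi\eta^i(x))\cos(\pi\eta^i(x))+\frac12\sin\left(\frac{\pi\eta^i(x)}{2}\right)\cos\left(\frac{\pi\eta^i(x)}{2}\right)\right).$$ Then $V_2'(x)=\varphi_N(x)+\xi_N(x)$ with $|\xi_N(x)|\le 3\pi\sum_{i=N}^{\infty}\frac{1}{4^i}=\frac{\pi}{4^{N-1}}$ for all $x\in[0,1]$.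
   Context: $\eta^i$ denotes the $i$-th iterate of $\eta$, with $\eta^0$ the identity. *)

theory Defs
  imports Complex_Main
begin

definition A :: "real \<Rightarrow> real" where
  "A x = (sin (2 * pi * x))^2"

definition mhat :: real where
  "mhat = (A (1/3) + A (2/3)) / 2"

definition eta :: "real \<Rightarrow> real" where
  "eta x = x / 4 + 1 / 2"

definition F :: "real \<Rightarrow> real" where
  "F x = A (x / 2) + A (x / 4 + 1 / 2)"

definition V2 :: "real \<Rightarrow> real" where
  "V2 x = lim (\<lambda>n. \<Sum>i<n. F ((eta ^^ i) x) - 2 * mhat)"

definition phi :: "nat \<Rightarrow> real \<Rightarrow> real" where
  "phi N x = (\<Sum>i\<le>N. (2 * pi / 4 ^ i) *
      (sin (pi * (eta ^^ i) x) * cos (pi * (eta ^^ i) x)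
       + 1/2 * sin (pi * (eta ^^ i) x / 2) * cos (pi * (eta ^^ i) x / 2)))"

end

theory Submission
  imports Defs "HOL-Analysis.Analysis"
begin

definition fp :: "nat \<Rightarrow> real \<Rightarrow> real" where
  "fp i x = (2 * pi / 4 ^ i) *
      (sin (pi * (eta ^^ i) x) * cos (pi * (eta ^^ i) x)
       + 1/2 * sin (pi * (eta ^^ i) x / 2) * cos (pi * (eta ^^ i) x / 2))"

lemma eta_iter: "(eta ^^ n) x = 2/3 + (x - 2/3) / 4 ^ n"
  by (induction n) (auto simp: eta_def field_simps)

lemma F_alt: "F y = sin (pi * y) ^ 2 + sin (pi * y / 2) ^ 2"
proof -
  have "sin (2 * pi * (y / 4 + 1 / 2)) = - sin (pi * y / 2)"
  proof -
    have "2 * pi * (y / 4 + 1 / 2) = pi * y / 2 + pi" by (simp add: field_simps)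
    then show ?thesis by (simp add: sin_add)
  qed
  moreover have "2 * pi * (y / 2) = pi * y" by simp
  ultimately show ?thesis by (simp add: F_def A_def)
qed

lemma F_deriv: "(F has_real_derivative
   2 * pi * (sin (pi * y) * cos (pi * y) + 1/2 * sin (pi * y / 2) * cos (pi * y / 2))) (at y)"
proof -
  have "((\<lambda>y. sin (pi * y) ^ 2 + sin (pi * y / 2) ^ 2) has_real_derivative
   2 * pi * (sin (pi * y) * cos (pi * y) + 1/2 * sin (pi * y / 2) * cos (pi * y / 2))) (at y)"
    by (auto intro!: derivative_eq_intros simp: field_simps)
  then show ?thesis using F_alt by (simp add: fun_eq_iff F_alt[abs_def])
qed

lemma term_deriv: "((\<lambda>x. F ((eta ^^ n) x) - 2 * mhat) has_real_derivative fp n x) (at x)"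
proof -
  have e: "((\<lambda>x. (eta ^^ n) x) has_real_derivative 1 / 4 ^ n) (at x)"
    unfolding eta_iter by (auto intro!: derivative_eq_intros)
  have "((\<lambda>x. F ((eta ^^ n) x) - 2 * mhat) has_real_derivative
     2 * pi * (sin (pi * (eta ^^ n) x) * cos (pi * (eta ^^ n) x) + 1/2 * sin (pi * (eta ^^ n) x / 2) * cos (pi * (eta ^^ n) x / 2)) * (1 / 4 ^ n)) (at x)"
    using DERIV_diff[OF DERIV_chain2[OF F_deriv e] DERIV_const[of "2*mhat"]] by simp
  then show ?thesis by (simp add: fp_def field_simps)
qed

lemma fp_bound: "norm (fp n x) \<le> 3 * pi * (1/4) ^ n"
proof -
  define a where "a = pi * (eta ^^ n) x"
  have s1: "\<bar>sin a * cos a\<bar> \<le> 1"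
    by (simp add: abs_mult mult_le_one)
  have s2: "\<bar>sin (a/2) * cos (a/2)\<bar> \<le> 1"
    by (simp add: abs_mult mult_le_one)
  have "\<bar>sin a * cos a + 1/2 * sin (a/2) * cos (a/2)\<bar> \<le> 3/2"
  proof -
    have "\<bar>sin a * cos a + 1/2 * sin (a/2) * cos (a/2)\<bar> \<le> \<bar>sin a * cos a\<bar> + \<bar>1/2 * sin (a/2) * cos (a/2)\<bar>"
      by (rule abs_triangle_ineq)
    moreover have "\<bar>1/2 * sin (a/2) * cos (a/2)\<bar> = 1/2 * \<bar>sin (a/2) * cos (a/2)\<bar>"
      by (simp add: abs_mult)
    ultimately show ?thesis using s1 s2 by linarith
  qed
  note X = this
  have "norm (fp n x) = (2*pi/4^n) * \<bar>sin a * cos a + 1/2 * sin (a/2) * cos (a/2)\<bar>"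
    unfolding fp_def a_def[symmetric] by (simp add: abs_mult)
  also have "\<dots> \<le> (2*pi/4^n) * (3/2)" by (rule mult_left_mono[OF X]) auto
  also have "\<dots> = 3 * pi * (1/4) ^ n" by (simp add: power_divide)
  finally show ?thesis .
qed

lemma summ_M: "summable (\<lambda>n. 3 * pi * (1/4::real) ^ n)"
  by (intro summable_mult summable_geometric) auto

lemma tail_sum: "(\<Sum>i. if N \<le> i then 1 / 4 ^ i else 0) = (4/3) * (1/4::real) ^ N"
proof -
  have "(\<lambda>i. (1/4::real) ^ N * (1/4) ^ i) sums ((1/4) ^ N * (1 / (1 - 1/4)))"
    by (intro sums_mult geometric_sums) auto
  moreover have "(\<lambda>i. (\<lambda>i. if N \<le> i then 1 / 4 ^ i else 0::real) (i + N)) = (\<lambda>i. (1/4::real) ^ N * (1/4) ^ i)"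
    by (simp add: fun_eq_iff power_add power_divide)
  ultimately have SH: "(\<lambda>i. (\<lambda>i. if N \<le> i then 1 / 4 ^ i else 0::real) (i + N)) sums ((1/4) ^ N * (4/3))"
    by simp
  then have "(\<lambda>i. if N \<le> i then 1 / 4 ^ i else 0::real) sums ((1/4) ^ N * (4/3) + (\<Sum>i<N. (\<lambda>i. if N \<le> i then 1 / 4 ^ i else 0::real) i))"
    by (rule sums_iff_shift[THEN iffD1])
  moreover have "(\<Sum>i<N. (\<lambda>i. if N \<le> i then 1 / 4 ^ i else 0::real) i) = 0" by simp
  ultimately have "(\<lambda>i. if N \<le> i then 1 / 4 ^ i else 0::real) sums ((1/4) ^ N * (4/3))"
    by simp
  then show ?thesis by (simp add: sums_iff)
qed

theorem mainTheorem11: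
  shows "\<forall>x\<in>{0..1::real}. \<exists>D. (V2 has_real_derivative D) (at x within {0..1}) \<and>
           (\<forall>N::nat. \<bar>D - phi N x\<bar> \<le> 3 * pi * (\<Sum>i. if N \<le> i then 1 / 4 ^ i else 0)
                     \<and> 3 * pi * (\<Sum>i. if N \<le> i then 1 / 4 ^ i else 0) = pi / 4 powr (real N - 1))"
proof
  fix x :: real assume "x \<in> {0..1}"
  have ul: "uniform_limit UNIV (\<lambda>n x. \<Sum>i<n. fp i x) (\<lambda>x. suminf (\<lambda>i. fp i x)) sequentially"
    by (rule Weierstrass_m_test[OF _ summ_M]) (rule fp_bound)
  have fix23: "(eta ^^ i) (2/3) = 2/3" for i by (simp add: eta_iter)
  have F23: "F (2/3) = 2 * mhat" by (simp add: F_def mhat_def)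
  have "summable (\<lambda>n. F ((eta ^^ n) (2/3)) - 2 * mhat)"
    by (simp add: fix23 F23)
  then obtain g where g: "\<And>y. (\<lambda>n. F ((eta ^^ n) y) - 2 * mhat) sums g y \<and>
       (g has_real_derivative suminf (\<lambda>i. fp i y)) (at y)"
    using has_field_derivative_series[of UNIV "\<lambda>n x. F ((eta ^^ n) x) - 2 * mhat" fp,
        OF convex_UNIV _ ul, of "2/3"] term_deriv by auto
  have V2g: "V2 = g"
  proof
    fix y
    have "(\<lambda>n. \<Sum>i<n. F ((eta ^^ i) y) - 2 * mhat) \<longlonglongrightarrow> g y"
      using g[of y] by (simp add: sums_def)
    then show "V2 y = g y" unfolding V2_def by (rule limI)
  qed
  define D where "D = suminf (\<lambda>i. fp i x)"
  have sfp: "summable (\<lambda>i. fp i x)"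
    by (rule summable_comparison_test[OF _ summ_M]) (intro exI[of _ 0] allI impI, use fp_bound in simp)
  show "\<exists>D. (V2 has_real_derivative D) (at x within {0..1}) \<and>
           (\<forall>N::nat. \<bar>D - phi N x\<bar> \<le> 3 * pi * (\<Sum>i. if N \<le> i then 1 / 4 ^ i else 0)
                     \<and> 3 * pi * (\<Sum>i. if N \<le> i then 1 / 4 ^ i else 0) = pi / 4 powr (real N - 1))"
  proof (intro exI conjI allI)
    show "(V2 has_real_derivative D) (at x within {0..1})"
      using g[of x] V2g D_def by (auto intro: has_field_derivative_at_within)
  next
    fix N :: nat
    have phi: "phi N x = (\<Sum>i<Suc N. fp i x)"
      unfolding phi_def fp_def lessThan_Suc_atMost ..
    have "D - phi N x = (\<Sum>n. fp (n + Suc N) x)"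
      using suminf_split_initial_segment[OF sfp, of "Suc N"] phi D_def by simp
    also have "norm \<dots> \<le> (\<Sum>n. 3 * pi * (1/4) ^ (n + Suc N))"
      by (rule norm_suminf_le[OF fp_bound])
        (use summable_ignore_initial_segment[OF summ_M, of "Suc N"] in simp)
    also have "\<dots> = 3 * pi * (1/4) ^ Suc N * (4/3)"
    proof -
      have "(\<lambda>n. (3 * pi * (1/4) ^ Suc N) * (1/4::real) ^ n) sums ((3 * pi * (1/4) ^ Suc N) * (1 / (1 - 1/4)))"
        by (intro sums_mult geometric_sums) auto
      then show ?thesis by (simp add: sums_iff power_add mult_ac)
    qed
    also have "\<dots> \<le> 3 * pi * (\<Sum>i. if N \<le> i then 1 / 4 ^ i else 0)"
      unfolding tail_sum by (simp add: power_divide divide_right_mono)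
    finally show "\<bar>D - phi N x\<bar> \<le> 3 * pi * (\<Sum>i. if N \<le> i then 1 / 4 ^ i else 0)" by simp
    have P: "(4::real) powr (real N - 1) = 4 ^ N / 4"
      by (simp add: powr_diff powr_realpow)
    show "3 * pi * (\<Sum>i. if N \<le> i then 1 / 4 ^ i else 0) = pi / 4 powr (real N - 1)"
      unfolding tail_sum P by (simp add: power_divide)
  qed
qed

end
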